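(* Let $p_c,q_c\in\mathbb{R}_{\ge 0}$, let $M=\begin{bmatrix} p_c & q_c\\ -q_c & p_c\end{bmatrix}$, and let $v_{\min}\in\mathbb{R}_{>0}$. Consider the constant power load (CPL) operator $y_{cp}$ mapping a voltage $v=[v_d,v_q]^\top$ to the current $i=y_{cp}(v)=\dfrac{1}{\|v\|_2^2}Mv$, defined on inputs satisfying $\|v\|_2\ge v_{\min}$. Then $\operatorname{SRG}(y_{cp})\subseteq \operatorname{SRG}(\widehat{y_{cp}})$, where $$\operatorname{SRG}(\widehat{y_{cp}})=\Big\{re^{\mathrm{j}\alpha}\;\Big|\;\alpha\in[-\pi,\pi],\ 0\le r\le \frac{\sigma_{\max}(M)}{v_{\min}^2}\Big\},$$ i.e. the closed disk in $\mathbb{C}$ centred at the origin of radius $\sigma_{\max}(M)/v_{\min}^2$.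
   Context: $\sigma_{\max}(M)$ denotes the largest singular value of $M$, and $\|\cdot\|_2$ the 2-norm (the paper calls it the $\mathcal{L}_2$-norm). For a Hilbert space with inner product $\langle\cdot,\cdot\rangle$, the angle between nonzero vectors is $\angle(z_1,z_2)=\arccos\big(\Re\langle z_1,z_2\rangle/(\|z_1\|_2\|z_2\|_2)\big)$. The scaled relative graph of an operator $A$ is the subset of $\mathbb{C}$ $$\operatorname{SRG}(A)=\Big\{\frac{\|y_2-y_1\|_2}{\|u_2-u_1\|_2}\exp\big[\pm\mathrm{j}\,\angle(u_2-u_1,\,y_2-y_1)\big]\Big\},$$ ranging over all pairs of distinct inputs $u_1,u_2$ in the domain of $A$ with $y_k=A(u_k)$ (and $y_2\neq y_1$). *)

theory Defs
  imports "HOL-Analysis.Analysis"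
begin

text \<open>Angle between two nonzero vectors of a real inner product space
  (the real part of the inner product is the inner product itself).\<close>
definition vangle :: "'a::real_inner \<Rightarrow> 'a \<Rightarrow> real" where
  "vangle z1 z2 = arccos (inner z1 z2 / (norm z1 * norm z2))"

definition SRG :: "'a::real_inner set \<Rightarrow> ('a \<Rightarrow> 'a) \<Rightarrow> complex set" where
  "SRG D A = {complex_of_real (norm (A u2 - A u1) / norm (u2 - u1))
                 * cis (s * vangle (u2 - u1) (A u2 - A u1)) | u1 u2 s.
               u1 \<in> D \<and> u2 \<in> D \<and> u1 \<noteq> u2 \<and> A u2 \<noteq> A u1 \<and> (s = 1 \<or> s = -1)}"

definition sigma_max :: "real^'n^'m \<Rightarrow> real" where
  "sigma_max M = sqrt (Max {l. \<exists>x. x \<noteq> 0 \<and> (transpose M ** M) *v x = l *\<^sub>R x})"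

definition Mcpl :: "real \<Rightarrow> real \<Rightarrow> real^2^2" where
  "Mcpl p q = vector [vector [p, q], vector [-q, p]]"

definition ycp :: "real^2^2 \<Rightarrow> real^2 \<Rightarrow> real^2" where
  "ycp M v = (1 / (norm v)\<^sup>2) *\<^sub>R (M *v v)"

end

theory Submission
  imports Defs
begin

lemma inv_dist:
  fixes x y :: "'a::real_inner"
  assumes "x \<noteq> 0" "y \<noteq> 0"
  shows "norm ((1 / (norm x)\<^sup>2) *\<^sub>R x - (1 / (norm y)\<^sup>2) *\<^sub>R y) = norm (x - y) / (norm x * norm y)"
proof -
  have nx: "norm x > 0" "norm y > 0" using assms by auto
  define a where "a = 1 / (norm x)\<^sup>2"
  define b where "b = 1 / (norm y)\<^sup>2"
  have e: "\<And>u v :: 'a. (norm (u - v))\<^sup>2 = (norm u)\<^sup>2 - 2 * inner u v + (norm v)\<^sup>2"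
    by (simp add: power2_norm_eq_inner inner_diff_left inner_diff_right inner_commute)
  have "(norm (a *\<^sub>R x - b *\<^sub>R y))\<^sup>2 = a\<^sup>2 * (norm x)\<^sup>2 - 2 * a * b * inner x y + b\<^sup>2 * (norm y)\<^sup>2"
    unfolding e by (simp add: power_mult_distrib)
  also have "\<dots> = ((norm x)\<^sup>2 - 2 * inner x y + (norm y)\<^sup>2) / ((norm x)\<^sup>2 * (norm y)\<^sup>2)"
    using nx unfolding a_def b_def by (simp add: field_simps power2_eq_square)
  also have "\<dots> = (norm (x - y) / (norm x * norm y))\<^sup>2"
    by (simp add: e power_divide power_mult_distrib)
  finally show ?thesis unfolding a_def b_def
    by (rule power2_eq_imp_eq) auto
qed
lemma Mcpl_norm:
  "norm (Mcpl p q *v w) = sqrt (p\<^sup>2 + q\<^sup>2) * norm w"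
proof -
  have "(norm (Mcpl p q *v w))\<^sup>2 = (p\<^sup>2 + q\<^sup>2) * (norm w)\<^sup>2"
    unfolding power2_norm_eq_inner
    by (simp add: inner_vec_def sum_2 Mcpl_def matrix_vector_mult_def
        power2_eq_square algebra_simps)
  also have "\<dots> = (sqrt (p\<^sup>2 + q\<^sup>2) * norm w)\<^sup>2"
    by (simp add: power_mult_distrib)
  finally show ?thesis by (rule power2_eq_imp_eq) auto
qed

lemma Mcpl_sigma: "sigma_max (Mcpl p q) = sqrt (p\<^sup>2 + q\<^sup>2)"
proof -
  have TM: "transpose (Mcpl p q) ** Mcpl p q = (p\<^sup>2 + q\<^sup>2) *\<^sub>R mat 1"
    by (simp add: vec_eq_iff forall_2 Mcpl_def transpose_def matrix_matrix_mult_def sum_2 mat_def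
        power2_eq_square)
  have "{l. \<exists>x. x \<noteq> 0 \<and> (transpose (Mcpl p q) ** Mcpl p q) *v x = l *\<^sub>R x} = {p\<^sup>2 + q\<^sup>2}"
  proof -
    have "(\<exists>x::real^2. x \<noteq> 0 \<and> (p\<^sup>2 + q\<^sup>2) *\<^sub>R x = l *\<^sub>R x) \<longleftrightarrow> l = p\<^sup>2 + q\<^sup>2" for l
    proof
      assume "\<exists>x::real^2. x \<noteq> 0 \<and> (p\<^sup>2 + q\<^sup>2) *\<^sub>R x = l *\<^sub>R x"
      then obtain x :: "real^2" where "x \<noteq> 0" "(p\<^sup>2 + q\<^sup>2) *\<^sub>R x = l *\<^sub>R x" by blast
      then show "l = p\<^sup>2 + q\<^sup>2" by (metis scaleR_cancel_right)
    next
      assume "l = p\<^sup>2 + q\<^sup>2"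
      then show "\<exists>x::real^2. x \<noteq> 0 \<and> (p\<^sup>2 + q\<^sup>2) *\<^sub>R x = l *\<^sub>R x"
        by (intro exI[of _ "vec 1"]) (auto simp: vec_eq_iff)
    qed
    then show ?thesis unfolding TM scaleR_matrix_vector_assoc[symmetric] matrix_vector_mul_lid by auto
  qed
  then show ?thesis unfolding sigma_max_def by simp
qed

theorem lemma1:
  fixes pc qc vmin :: real
  assumes "pc \<ge> 0" and "qc \<ge> 0" and "vmin > 0"
  shows "SRG {v :: real^2. norm v \<ge> vmin} (ycp (Mcpl pc qc))
         \<subseteq> {complex_of_real r * cis \<alpha> | r \<alpha>. \<alpha> \<in> {-pi..pi} \<and> 0 \<le> r \<and>
               r \<le> sigma_max (Mcpl pc qc) / vmin\<^sup>2}"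
proof
  fix z assume "z \<in> SRG {v :: real^2. norm v \<ge> vmin} (ycp (Mcpl pc qc))"
  then obtain u1 u2 :: "real^2" and s where
    u: "norm u1 \<ge> vmin" "norm u2 \<ge> vmin" "u1 \<noteq> u2" and s: "s = 1 \<or> s = -1" and
    z: "z = complex_of_real (norm (ycp (Mcpl pc qc) u2 - ycp (Mcpl pc qc) u1) / norm (u2 - u1))
                 * cis (s * vangle (u2 - u1) (ycp (Mcpl pc qc) u2 - ycp (Mcpl pc qc) u1))"
    unfolding SRG_def by blast
  define c where "c = sqrt (pc\<^sup>2 + qc\<^sup>2)"
  define a where "a = u2 - u1"
  define b where "b = ycp (Mcpl pc qc) u2 - ycp (Mcpl pc qc) u1"
  have n1: "norm u1 > 0" "norm u2 > 0" using u assms(3) by auto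
  have "b = Mcpl pc qc *v ((1 / (norm u2)\<^sup>2) *\<^sub>R u2 - (1 / (norm u1)\<^sup>2) *\<^sub>R u1)"
    unfolding b_def ycp_def by (simp add: matrix_vector_mult_diff_distrib matrix_vector_mult_scaleR)
  hence nb: "norm b = c * (norm a / (norm u2 * norm u1))"
    using n1 by (simp add: Mcpl_norm c_def a_def inv_dist)
  have apos: "norm a > 0" using u by (simp add: a_def)
  have c0: "c \<ge> 0" by (simp add: c_def)
  have "norm u2 * norm u1 \<ge> vmin * vmin"
    using u assms(3) by (intro mult_mono) auto
  hence "1 / (norm u2 * norm u1) \<le> 1 / vmin\<^sup>2"
    using assms(3) by (simp add: power2_eq_square frac_le)
  hence "c * (1 / (norm u2 * norm u1)) \<le> c * (1 / vmin\<^sup>2)"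
    using c0 by (rule mult_left_mono)
  moreover have "norm b / norm a = c * (1 / (norm u2 * norm u1))"
    using nb apos by simp
  ultimately have r: "norm b / norm a \<le> c / vmin\<^sup>2" by simp
  define t where "t = inner a b / (norm a * norm b)"
  have "\<bar>inner a b\<bar> \<le> norm a * norm b" by (rule Cauchy_Schwarz_ineq2)
  hence t1: "-1 \<le> t \<and> t \<le> 1"
    unfolding t_def
    by (cases "norm a * norm b = 0") (auto simp: divide_simps abs_le_iff
        intro: order.trans[OF _ zero_le_mult_iff[THEN iffD2]])
  have th: "0 \<le> vangle a b \<and> vangle a b \<le> pi"
    unfolding vangle_def t_def[symmetric] using t1 arccos_lbound arccos_ubound by auto
  have "s * vangle a b \<in> {-pi..pi}" using s th by auto
  moreover have "0 \<le> norm b / norm a" by simp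
  ultimately show "z \<in> {complex_of_real r * cis \<alpha> | r \<alpha>. \<alpha> \<in> {-pi..pi} \<and> 0 \<le> r \<and>
               r \<le> sigma_max (Mcpl pc qc) / vmin\<^sup>2}"
    using r unfolding z a_def[symmetric] b_def[symmetric] Mcpl_sigma c_def[symmetric] by blast
qed

end
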